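(* For $\alpha\in[0,1]$ let $P^{(\alpha)}_{ABC}$ be the distribution on $\{0,1\}^3$ with $P^{(\alpha)}_{ABC}(abc)=\alpha/2$ if $a=b=c$ and $(1-\alpha)/6$ otherwise. Then $P^{(\alpha)}_{ABC}$ is not compatible with the Triangle scenario for every $\alpha$ with $5/8<\alpha\le 1$.
   Context: The Triangle scenario is the causal structure with observed nodes $A,B,C$, latent nodes $X,Y,Z$ and edges $X\to A$, $X\to B$, $Y\to A$, $Y\to C$, $Z\to B$, $Z\to C$. A distribution $P_{ABC}$ is compatible with it if there exist distributions $P_X,P_Y,P_Z$ (latent variables of arbitrary cardinality) and conditionals $P_{A|XY},P_{B|XZ},P_{C|YZ}$ such that $P_{ABC}$ is the marginal of $P_XP_YP_ZP_{A|XY}P_{B|XZ}P_{C|YZ}$. *)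

theory Defs
  imports "HOL-Probability.Probability"
begin

text \<open>Observed variables A, B, C take values in {0,1}, represented by bool
  (False = 0, True = 1). A distribution on {0,1}^3 is a function
  bool => bool => bool => real.\<close>

definition P_alpha :: "real \<Rightarrow> bool \<Rightarrow> bool \<Rightarrow> bool \<Rightarrow> real" where
  "P_alpha \<alpha> a b c = (if a = b \<and> b = c then \<alpha> / 2 else (1 - \<alpha>) / 6)"

definition is_kernel :: "'s measure \<Rightarrow> ('s \<Rightarrow> bool \<Rightarrow> real) \<Rightarrow> bool" where
  "is_kernel M K \<longleftrightarrow>
     (\<forall>a. (\<lambda>s. K s a) \<in> borel_measurable M) \<and>
     (\<forall>s\<in>space M. \<forall>a. K s a \<ge> 0) \<and>
     (\<forall>s\<in>space M. K s True + K s False = 1)"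

definition triangle_compatible_with ::
  "'x measure \<Rightarrow> 'y measure \<Rightarrow> 'z measure \<Rightarrow> (bool \<Rightarrow> bool \<Rightarrow> bool \<Rightarrow> real) \<Rightarrow> bool" where
  "triangle_compatible_with MX MY MZ P \<longleftrightarrow>
     prob_space MX \<and> prob_space MY \<and> prob_space MZ \<and>
     (\<exists>(KA :: 'x \<times> 'y \<Rightarrow> bool \<Rightarrow> real) (KB :: 'x \<times> 'z \<Rightarrow> bool \<Rightarrow> real)
        (KC :: 'y \<times> 'z \<Rightarrow> bool \<Rightarrow> real).
        is_kernel (MX \<Otimes>\<^sub>M MY) KA \<and> is_kernel (MX \<Otimes>\<^sub>M MZ) KB \<and>
        is_kernel (MY \<Otimes>\<^sub>M MZ) KC \<and>
        (\<forall>a b c. P a b c =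
           (\<integral>w. (case w of (x, y, z) \<Rightarrow> KA (x, y) a * KB (x, z) b * KC (y, z) c)
              \<partial>(MX \<Otimes>\<^sub>M (MY \<Otimes>\<^sub>M MZ)))))"

end

theory Submission
  imports Defs
begin

lemma bint:
  fixes f :: "'a \<Rightarrow> real"
  assumes "prob_space M" "f \<in> borel_measurable M" "\<forall>x\<in>space M. \<bar>f x\<bar> \<le> B"
  shows "integrable M f"
proof -
  interpret prob_space M by fact
  show ?thesis using assms(2,3) by (intro integrable_const_bound[where B=B]) auto
qed

lemma unit_int:
  fixes u :: "'a \<Rightarrow> real"
  assumes "prob_space M" "u \<in> borel_measurable M" "\<forall>x\<in>space M. 0 \<le> u x \<and> u x \<le> 1"
  shows "0 \<le> integral\<^sup>L M u \<and> integral\<^sup>L M u \<le> 1"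
proof -
  interpret prob_space M by fact
  have i: "integrable M u" using bint[of M u 1] assms by auto
  have "integral\<^sup>L M u \<le> integral\<^sup>L M (\<lambda>_. 1)"
    using assms by (intro integral_mono i) auto
  moreover have "0 \<le> integral\<^sup>L M u" using assms by (intro integral_nonneg_AE AE_I2) auto
  ultimately show ?thesis by (simp add: prob_space)
qed

lemma fub:
  fixes G :: "'x \<times> 'y \<times> 'z \<Rightarrow> real"
  assumes X: "prob_space MX" and Y: "prob_space MY" and Z: "prob_space MZ"
    and G: "G \<in> borel_measurable (MX \<Otimes>\<^sub>M (MY \<Otimes>\<^sub>M MZ))"
    and B: "\<forall>w\<in>space (MX \<Otimes>\<^sub>M (MY \<Otimes>\<^sub>M MZ)). \<bar>G w\<bar> \<le> B"
  shows "integral\<^sup>L (MX \<Otimes>\<^sub>M (MY \<Otimes>\<^sub>M MZ)) G = (\<integral>x. (\<integral>z. (\<integral>y. G (x,(y,z)) \<partial>MY) \<partial>MZ) \<partial>MX)"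
proof -
  interpret X: prob_space MX by fact
  interpret Y: prob_space MY by fact
  interpret Z: prob_space MZ by fact
  interpret YZ: pair_prob_space MY MZ by unfold_locales
  interpret N: prob_space "MY \<Otimes>\<^sub>M MZ" by (rule prob_space_pair[OF Y Z])
  interpret XYZ: pair_prob_space MX "MY \<Otimes>\<^sub>M MZ" by unfold_locales
  have int: "integrable (MX \<Otimes>\<^sub>M (MY \<Otimes>\<^sub>M MZ)) G"
    by (rule bint[OF prob_space_pair[OF X prob_space_pair[OF Y Z]] G B])
  have "integral\<^sup>L (MX \<Otimes>\<^sub>M (MY \<Otimes>\<^sub>M MZ)) G = (\<integral>x. (\<integral>w. G (x, w) \<partial>(MY \<Otimes>\<^sub>M MZ)) \<partial>MX)"
    using XYZ.integral_fst'[OF int] by simp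
  also have "\<dots> = (\<integral>x. (\<integral>z. (\<integral>y. G (x,(y,z)) \<partial>MY) \<partial>MZ) \<partial>MX)"
  proof (rule Bochner_Integration.integral_cong[OF refl])
    fix x assume x: "x \<in> space MX"
    have m: "(\<lambda>w. G (x, w)) \<in> borel_measurable (MY \<Otimes>\<^sub>M MZ)"
      using measurable_Pair2[OF G x] .
    have "integrable (MY \<Otimes>\<^sub>M MZ) (\<lambda>w. G (x, w))"
      by (rule bint[OF prob_space_pair[OF Y Z] m, of B]) (use B x in \<open>auto simp: space_pair_measure\<close>)
    moreover have "(\<lambda>(y,z). G (x,(y,z))) = (\<lambda>w. G (x, w))" by auto
    ultimately show "(\<integral>w. G (x, w) \<partial>(MY \<Otimes>\<^sub>M MZ)) = (\<integral>z. (\<integral>y. G (x,(y,z)) \<partial>MY) \<partial>MZ)"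
      using YZ.integral_snd[of "\<lambda>y z. G (x,(y,z))"] by simp
  qed
  finally show ?thesis .
qed

lemma pw:
  fixes a c g :: real
  assumes "0 \<le> a" "a \<le> 1" "0 \<le> c" "c \<le> 1" "0 \<le> g" "g \<le> 1"
  shows "g * a + g * c - g \<le> a * c"
proof -
  have "0 \<le> (1 - a) * (1 - c)" using assms by simp
  then have "a + c - 1 \<le> a * c" by (simp add: algebra_simps)
  show ?thesis
  proof (cases "a + c - 1 \<le> 0")
    case True
    then have "g * (a + c - 1) \<le> 0" using assms by (simp add: mult_nonneg_nonpos)
    moreover have "g * a + g * c - g = g * (a + c - 1)" by (simp add: algebra_simps)
    ultimately show ?thesis using assms mult_nonneg_nonneg[of a c] by linarith
  next
    case False
    then have "g * (a + c - 1) \<le> a + c - 1" using assms by (simp add: mult_left_le_one_le)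
    moreover have "g * a + g * c - g = g * (a + c - 1)" by (simp add: algebra_simps)
    ultimately show ?thesis using \<open>a + c - 1 \<le> a * c\<close> by linarith
  qed
qed

lemma key:
  fixes f :: "'x \<times> 'y \<Rightarrow> real" and g :: "'x \<times> 'z \<Rightarrow> real" and h :: "'y \<times> 'z \<Rightarrow> real"
  assumes X: "prob_space MX" and Y: "prob_space MY" and Z: "prob_space MZ"
    and fm[measurable]: "f \<in> borel_measurable (MX \<Otimes>\<^sub>M MY)"
    and fb: "\<forall>w\<in>space (MX \<Otimes>\<^sub>M MY). 0 \<le> f w \<and> f w \<le> 1"
    and gm[measurable]: "g \<in> borel_measurable (MX \<Otimes>\<^sub>M MZ)"
    and gb: "\<forall>w\<in>space (MX \<Otimes>\<^sub>M MZ). 0 \<le> g w \<and> g w \<le> 1"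
    and hm[measurable]: "h \<in> borel_measurable (MY \<Otimes>\<^sub>M MZ)"
    and hb: "\<forall>w\<in>space (MY \<Otimes>\<^sub>M MZ). 0 \<le> h w \<and> h w \<le> 1"
  shows "(\<integral>w. (case w of (x,y,z) \<Rightarrow> g (x,z) * f (x,y) + g (x,z) * h (y,z) - g (x,z)) \<partial>(MX \<Otimes>\<^sub>M (MY \<Otimes>\<^sub>M MZ)))
    \<le> (\<integral>w. (case w of (x,y,z) \<Rightarrow> f (x,y)) \<partial>(MX \<Otimes>\<^sub>M (MY \<Otimes>\<^sub>M MZ))) *
      (\<integral>w. (case w of (x,y,z) \<Rightarrow> h (y,z)) \<partial>(MX \<Otimes>\<^sub>M (MY \<Otimes>\<^sub>M MZ)))"
proof -
  interpret X: prob_space MX by fact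
  interpret Y: prob_space MY by fact
  interpret Z: prob_space MZ by fact
  have XYZ: "prob_space (MX \<Otimes>\<^sub>M (MY \<Otimes>\<^sub>M MZ))" by (intro prob_space_pair X prob_space_pair[OF Y Z])
  define abar where "abar x = (\<integral>y. f (x,y) \<partial>MY)" for x
  define hbar where "hbar z = (\<integral>y. h (y,z) \<partial>MY)" for z
  have am[measurable]: "abar \<in> borel_measurable MX"
    unfolding abar_def using Y.borel_measurable_lebesgue_integral[of "\<lambda>x y. f (x,y)" MX] by simp
  have "(\<lambda>(z,y). h (y,z)) \<in> borel_measurable (MZ \<Otimes>\<^sub>M MY)" by measurable
  then have hbm[measurable]: "hbar \<in> borel_measurable MZ"
    unfolding hbar_def using Y.borel_measurable_lebesgue_integral[of "\<lambda>z y. h (y,z)" MZ] by simp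
  have fsec: "integrable MY (\<lambda>y. f (x,y))" "0 \<le> abar x \<and> abar x \<le> 1" if x: "x \<in> space MX" for x
  proof -
    have m: "(\<lambda>y. f (x,y)) \<in> borel_measurable MY" using measurable_Pair2[OF fm x] .
    have b: "\<forall>y\<in>space MY. 0 \<le> f (x,y) \<and> f (x,y) \<le> 1" using fb x by (auto simp: space_pair_measure)
    show "integrable MY (\<lambda>y. f (x,y))" by (rule bint[OF Y m, of 1]) (use b in auto)
    show "0 \<le> abar x \<and> abar x \<le> 1" unfolding abar_def by (rule unit_int[OF Y m b])
  qed
  have hsec: "integrable MY (\<lambda>y. h (y,z))" "0 \<le> hbar z \<and> hbar z \<le> 1" if z: "z \<in> space MZ" for z
  proof -
    have m: "(\<lambda>y. h (y,z)) \<in> borel_measurable MY" using measurable_Pair1[OF hm z] .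
    have b: "\<forall>y\<in>space MY. 0 \<le> h (y,z) \<and> h (y,z) \<le> 1" using hb z by (auto simp: space_pair_measure)
    show "integrable MY (\<lambda>y. h (y,z))" by (rule bint[OF Y m, of 1]) (use b in auto)
    show "0 \<le> hbar z \<and> hbar z \<le> 1" unfolding hbar_def by (rule unit_int[OF Y m b])
  qed
  have gsec: "0 \<le> g (x,z) \<and> g (x,z) \<le> 1" if "x \<in> space MX" "z \<in> space MZ" for x z
    using gb that by (auto simp: space_pair_measure)
  have fsec2: "0 \<le> f (x,y) \<and> f (x,y) \<le> 1" if "x \<in> space MX" "y \<in> space MY" for x y
    using fb that by (auto simp: space_pair_measure)
  have hsec2: "0 \<le> h (y,z) \<and> h (y,z) \<le> 1" if "y \<in> space MY" "z \<in> space MZ" for y z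
    using hb that by (auto simp: space_pair_measure)
  define Q where "Q w = (case w of (x,y,z) \<Rightarrow> g (x,z) * f (x,y) + g (x,z) * h (y,z) - g (x,z))" for w
  define Psi where "Psi w = (case w of (x,y,z) \<Rightarrow> g (x,z) * abar x + g (x,z) * hbar z - g (x,z))" for w :: "'x \<times> 'y \<times> 'z"
  define Phi where "Phi w = (case w of (x,y,z) \<Rightarrow> abar x * hbar z)" for w :: "'x \<times> 'y \<times> 'z"
  define F where "F w = (case w of (x,y,z) \<Rightarrow> f (x,y))" for w :: "'x \<times> 'y \<times> 'z"
  define H where "H w = (case w of (x,y,z) \<Rightarrow> h (y,z))" for w :: "'x \<times> 'y \<times> 'z"
  have Qm: "Q \<in> borel_measurable (MX \<Otimes>\<^sub>M (MY \<Otimes>\<^sub>M MZ))" unfolding Q_def by measurable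
  have Psim: "Psi \<in> borel_measurable (MX \<Otimes>\<^sub>M (MY \<Otimes>\<^sub>M MZ))" unfolding Psi_def by measurable
  have Phim: "Phi \<in> borel_measurable (MX \<Otimes>\<^sub>M (MY \<Otimes>\<^sub>M MZ))" unfolding Phi_def by measurable
  have Fm: "F \<in> borel_measurable (MX \<Otimes>\<^sub>M (MY \<Otimes>\<^sub>M MZ))" unfolding F_def by measurable
  have Hm: "H \<in> borel_measurable (MX \<Otimes>\<^sub>M (MY \<Otimes>\<^sub>M MZ))" unfolding H_def by measurable
  have Qb: "\<forall>w\<in>space (MX \<Otimes>\<^sub>M (MY \<Otimes>\<^sub>M MZ)). \<bar>Q w\<bar> \<le> 3"
  proof
    fix w assume "w \<in> space (MX \<Otimes>\<^sub>M (MY \<Otimes>\<^sub>M MZ))"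
    then obtain x y z where w: "w = (x,y,z)" "x \<in> space MX" "y \<in> space MY" "z \<in> space MZ"
      by (auto simp: space_pair_measure)
    have "0 \<le> g (x,z) * f (x,y)" "g (x,z) * f (x,y) \<le> 1" "0 \<le> g (x,z) * h (y,z)" "g (x,z) * h (y,z) \<le> 1"
      using gsec[OF w(2,4)] fsec2[OF w(2,3)] hsec2[OF w(3,4)] by (auto intro: mult_le_one)
    then show "\<bar>Q w\<bar> \<le> 3" using gsec[OF w(2,4)] unfolding Q_def w by auto
  qed
  have Psib: "\<forall>w\<in>space (MX \<Otimes>\<^sub>M (MY \<Otimes>\<^sub>M MZ)). \<bar>Psi w\<bar> \<le> 3"
  proof
    fix w assume "w \<in> space (MX \<Otimes>\<^sub>M (MY \<Otimes>\<^sub>M MZ))"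
    then obtain x y z where w: "w = (x,y,z)" "x \<in> space MX" "y \<in> space MY" "z \<in> space MZ"
      by (auto simp: space_pair_measure)
    have "0 \<le> g (x,z) * abar x" "g (x,z) * abar x \<le> 1" "0 \<le> g (x,z) * hbar z" "g (x,z) * hbar z \<le> 1"
      using gsec[OF w(2,4)] fsec(2)[OF w(2)] hsec(2)[OF w(4)] by (auto intro: mult_le_one)
    then show "\<bar>Psi w\<bar> \<le> 3" using gsec[OF w(2,4)] unfolding Psi_def w by auto
  qed
  have Phib: "\<forall>w\<in>space (MX \<Otimes>\<^sub>M (MY \<Otimes>\<^sub>M MZ)). \<bar>Phi w\<bar> \<le> 1"
  proof
    fix w assume "w \<in> space (MX \<Otimes>\<^sub>M (MY \<Otimes>\<^sub>M MZ))"
    then obtain x y z where w: "w = (x,y,z)" "x \<in> space MX" "y \<in> space MY" "z \<in> space MZ"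
      by (auto simp: space_pair_measure)
    show "\<bar>Phi w\<bar> \<le> 1"
      using fsec(2)[OF w(2)] hsec(2)[OF w(4)] unfolding Phi_def w by (auto intro: mult_le_one)
  qed
  have Fb: "\<forall>w\<in>space (MX \<Otimes>\<^sub>M (MY \<Otimes>\<^sub>M MZ)). \<bar>F w\<bar> \<le> 1"
    using fsec2 unfolding F_def by (auto simp: space_pair_measure)
  have Hb: "\<forall>w\<in>space (MX \<Otimes>\<^sub>M (MY \<Otimes>\<^sub>M MZ)). \<bar>H w\<bar> \<le> 1"
    using hsec2 unfolding H_def by (auto simp: space_pair_measure)
  have eF: "(\<integral>x. abar x \<partial>MX) = integral\<^sup>L (MX \<Otimes>\<^sub>M (MY \<Otimes>\<^sub>M MZ)) F"
    unfolding fub[OF X Y Z Fm Fb] unfolding F_def abar_def by (simp add: Z.prob_space)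
  have eH: "(\<integral>z. hbar z \<partial>MZ) = integral\<^sup>L (MX \<Otimes>\<^sub>M (MY \<Otimes>\<^sub>M MZ)) H"
    unfolding fub[OF X Y Z Hm Hb] unfolding H_def hbar_def by (simp add: X.prob_space)
  have "integral\<^sup>L (MX \<Otimes>\<^sub>M (MY \<Otimes>\<^sub>M MZ)) Q = (\<integral>x. (\<integral>z. (\<integral>y. Q (x,(y,z)) \<partial>MY) \<partial>MZ) \<partial>MX)"
    by (rule fub[OF X Y Z Qm Qb])
  also have "\<dots> = (\<integral>x. (\<integral>z. (\<integral>y. Psi (x,(y,z)) \<partial>MY) \<partial>MZ) \<partial>MX)"
  proof (rule Bochner_Integration.integral_cong[OF refl], rule Bochner_Integration.integral_cong[OF refl])
    fix x z assume x: "x \<in> space MX" and z: "z \<in> space MZ"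
    have "(\<integral>y. Q (x,(y,z)) \<partial>MY) = (\<integral>y. g (x,z) * f (x,y) + g (x,z) * h (y,z) - g (x,z) \<partial>MY)"
      unfolding Q_def by simp
    also have "\<dots> = g (x,z) * abar x + g (x,z) * hbar z - g (x,z)"
      using fsec(1)[OF x] hsec(1)[OF z] unfolding abar_def hbar_def
      by (simp add: Y.prob_space)
    also have "\<dots> = (\<integral>y. Psi (x,(y,z)) \<partial>MY)"
      unfolding Psi_def by (simp add: Y.prob_space)
    finally show "(\<integral>y. Q (x,(y,z)) \<partial>MY) = (\<integral>y. Psi (x,(y,z)) \<partial>MY)" .
  qed
  also have "\<dots> = integral\<^sup>L (MX \<Otimes>\<^sub>M (MY \<Otimes>\<^sub>M MZ)) Psi"
    by (rule fub[OF X Y Z Psim Psib, symmetric])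
  also have "\<dots> \<le> integral\<^sup>L (MX \<Otimes>\<^sub>M (MY \<Otimes>\<^sub>M MZ)) Phi"
  proof (rule integral_mono)
    show "integrable (MX \<Otimes>\<^sub>M (MY \<Otimes>\<^sub>M MZ)) Psi" by (rule bint[OF XYZ Psim Psib])
    show "integrable (MX \<Otimes>\<^sub>M (MY \<Otimes>\<^sub>M MZ)) Phi" by (rule bint[OF XYZ Phim Phib])
    fix w assume "w \<in> space (MX \<Otimes>\<^sub>M (MY \<Otimes>\<^sub>M MZ))"
    then obtain x y z where w: "w = (x,y,z)" "x \<in> space MX" "y \<in> space MY" "z \<in> space MZ"
      by (auto simp: space_pair_measure)
    show "Psi w \<le> Phi w" unfolding Psi_def Phi_def w
      using pw fsec(2)[OF w(2)] hsec(2)[OF w(4)] gsec[OF w(2,4)] by simp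
  qed
  also have "\<dots> = (\<integral>x. (\<integral>z. (\<integral>y. Phi (x,(y,z)) \<partial>MY) \<partial>MZ) \<partial>MX)"
    by (rule fub[OF X Y Z Phim Phib])
  also have "\<dots> = (\<integral>x. abar x \<partial>MX) * (\<integral>z. hbar z \<partial>MZ)"
    unfolding Phi_def by (simp add: Y.prob_space)
  also have "\<dots> = integral\<^sup>L (MX \<Otimes>\<^sub>M (MY \<Otimes>\<^sub>M MZ)) F * integral\<^sup>L (MX \<Otimes>\<^sub>M (MY \<Otimes>\<^sub>M MZ)) H"
    using eF eH by simp
  finally have "integral\<^sup>L (MX \<Otimes>\<^sub>M (MY \<Otimes>\<^sub>M MZ)) Q \<le> integral\<^sup>L (MX \<Otimes>\<^sub>M (MY \<Otimes>\<^sub>M MZ)) F * integral\<^sup>L (MX \<Otimes>\<^sub>M (MY \<Otimes>\<^sub>M MZ)) H" .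
  then show ?thesis unfolding Q_def[abs_def] F_def[abs_def] H_def[abs_def] .
qed

theorem mainTheorem8:
  fixes \<alpha> :: real
    and MX :: "'x measure" and MY :: "'y measure" and MZ :: "'z measure"
  assumes "5/8 < \<alpha>" and "\<alpha> \<le> 1"
  shows "\<not> triangle_compatible_with MX MY MZ (P_alpha \<alpha>)"
proof
  assume "triangle_compatible_with MX MY MZ (P_alpha \<alpha>)"
  then obtain KA KB KC where X: "prob_space MX" and Y: "prob_space MY" and Z: "prob_space MZ"
    and kA: "is_kernel (MX \<Otimes>\<^sub>M MY) KA" and kB: "is_kernel (MX \<Otimes>\<^sub>M MZ) KB"
    and kC: "is_kernel (MY \<Otimes>\<^sub>M MZ) KC"
    and eq: "\<forall>a b c. P_alpha \<alpha> a b c =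
           (\<integral>w. (case w of (x, y, z) \<Rightarrow> KA (x, y) a * KB (x, z) b * KC (y, z) c)
              \<partial>(MX \<Otimes>\<^sub>M (MY \<Otimes>\<^sub>M MZ)))"
    unfolding triangle_compatible_with_def by blast
  have XYZ: "prob_space (MX \<Otimes>\<^sub>M (MY \<Otimes>\<^sub>M MZ))" by (intro prob_space_pair X prob_space_pair[OF Y Z])
  have mA[measurable]: "\<And>a. (\<lambda>s. KA s a) \<in> borel_measurable (MX \<Otimes>\<^sub>M MY)"
    using kA unfolding is_kernel_def by blast
  have mB[measurable]: "\<And>a. (\<lambda>s. KB s a) \<in> borel_measurable (MX \<Otimes>\<^sub>M MZ)"
    using kB unfolding is_kernel_def by blast
  have mC[measurable]: "\<And>a. (\<lambda>s. KC s a) \<in> borel_measurable (MY \<Otimes>\<^sub>M MZ)"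
    using kC unfolding is_kernel_def by blast
  have kA': "\<forall>s\<in>space (MX \<Otimes>\<^sub>M MY). \<forall>a. KA s a \<ge> 0" "\<forall>s\<in>space (MX \<Otimes>\<^sub>M MY). KA s True + KA s False = 1"
    using kA unfolding is_kernel_def by auto
  have bA: "0 \<le> KA s a \<and> KA s a \<le> 1" if "s \<in> space (MX \<Otimes>\<^sub>M MY)" for s a
    using kA'(1)[rule_format, OF that, of True] kA'(1)[rule_format, OF that, of False] kA'(2)[rule_format, OF that]
    by (cases a) auto
  have sA: "KA s False = 1 - KA s True" if "s \<in> space (MX \<Otimes>\<^sub>M MY)" for s
    using kA'(2)[rule_format, OF that] by simp
  have kB': "\<forall>s\<in>space (MX \<Otimes>\<^sub>M MZ). \<forall>a. KB s a \<ge> 0" "\<forall>s\<in>space (MX \<Otimes>\<^sub>M MZ). KB s True + KB s False = 1"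
    using kB unfolding is_kernel_def by auto
  have bB: "0 \<le> KB s a \<and> KB s a \<le> 1" if "s \<in> space (MX \<Otimes>\<^sub>M MZ)" for s a
    using kB'(1)[rule_format, OF that, of True] kB'(1)[rule_format, OF that, of False] kB'(2)[rule_format, OF that]
    by (cases a) auto
  have sB: "KB s False = 1 - KB s True" if "s \<in> space (MX \<Otimes>\<^sub>M MZ)" for s
    using kB'(2)[rule_format, OF that] by simp
  have kC': "\<forall>s\<in>space (MY \<Otimes>\<^sub>M MZ). \<forall>a. KC s a \<ge> 0" "\<forall>s\<in>space (MY \<Otimes>\<^sub>M MZ). KC s True + KC s False = 1"
    using kC unfolding is_kernel_def by auto
  have bC: "0 \<le> KC s a \<and> KC s a \<le> 1" if "s \<in> space (MY \<Otimes>\<^sub>M MZ)" for s a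
    using kC'(1)[rule_format, OF that, of True] kC'(1)[rule_format, OF that, of False] kC'(2)[rule_format, OF that]
    by (cases a) auto
  have sC: "KC s False = 1 - KC s True" if "s \<in> space (MY \<Otimes>\<^sub>M MZ)" for s
    using kC'(2)[rule_format, OF that] by simp
  define T where "T a b c = (\<lambda>w. case w of (x, y, z) \<Rightarrow> KA (x, y) a * KB (x, z) b * KC (y, z) c)" for a b c
  have Tm: "T a b c \<in> borel_measurable (MX \<Otimes>\<^sub>M (MY \<Otimes>\<^sub>M MZ))" for a b c
    unfolding T_def by measurable
  have Tint: "integrable (MX \<Otimes>\<^sub>M (MY \<Otimes>\<^sub>M MZ)) (T a b c)" for a b c
  proof (rule bint[OF XYZ Tm, of _ _ _ 1], intro ballI)
    fix w assume "w \<in> space (MX \<Otimes>\<^sub>M (MY \<Otimes>\<^sub>M MZ))"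
    then obtain x y z where w: "w = (x,y,z)" "x \<in> space MX" "y \<in> space MY" "z \<in> space MZ"
      by (auto simp: space_pair_measure)
    have "(x,y) \<in> space (MX \<Otimes>\<^sub>M MY)" "(x,z) \<in> space (MX \<Otimes>\<^sub>M MZ)" "(y,z) \<in> space (MY \<Otimes>\<^sub>M MZ)"
      using w by (auto simp: space_pair_measure)
    then show "\<bar>T a b c w\<bar> \<le> 1" unfolding T_def w
      using bA bB bC by (auto intro!: mult_le_one simp: abs_mult)
  qed
  have P: "P_alpha \<alpha> a b c = integral\<^sup>L (MX \<Otimes>\<^sub>M (MY \<Otimes>\<^sub>M MZ)) (T a b c)" for a b c
    using eq unfolding T_def by blast
  have cong: "integral\<^sup>L (MX \<Otimes>\<^sub>M (MY \<Otimes>\<^sub>M MZ)) F = integral\<^sup>L (MX \<Otimes>\<^sub>M (MY \<Otimes>\<^sub>M MZ)) G"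
    if "\<And>x y z. (x,y) \<in> space (MX \<Otimes>\<^sub>M MY) \<Longrightarrow> (x,z) \<in> space (MX \<Otimes>\<^sub>M MZ) \<Longrightarrow>
       (y,z) \<in> space (MY \<Otimes>\<^sub>M MZ) \<Longrightarrow> F (x,y,z) = G (x,y,z)" for F G :: "'x \<times> 'y \<times> 'z \<Rightarrow> real"
  proof (rule Bochner_Integration.integral_cong[OF refl])
    fix w assume "w \<in> space (MX \<Otimes>\<^sub>M (MY \<Otimes>\<^sub>M MZ))"
    then obtain x y z where w: "w = (x,y,z)" "x \<in> space MX" "y \<in> space MY" "z \<in> space MZ"
      by (auto simp: space_pair_measure)
    show "F w = G w"
      using that[of x y z] w by (auto simp: space_pair_measure)
  qed
  have Ef: "(\<integral>w. (case w of (x,y,z) \<Rightarrow> KA (x,y) True) \<partial>(MX \<Otimes>\<^sub>M (MY \<Otimes>\<^sub>M MZ))) = 1/2"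
  proof -
    have "(\<integral>w. (case w of (x,y,z) \<Rightarrow> KA (x,y) True) \<partial>(MX \<Otimes>\<^sub>M (MY \<Otimes>\<^sub>M MZ))) =
      (\<integral>w. (T True True True w + T True True False w + T True False True w + T True False False w) \<partial>(MX \<Otimes>\<^sub>M (MY \<Otimes>\<^sub>M MZ)))"
      unfolding T_def by (rule cong) (simp add: sB sC algebra_simps)
    also have "\<dots> = P_alpha \<alpha> True True True + P_alpha \<alpha> True True False + P_alpha \<alpha> True False True + P_alpha \<alpha> True False False"
      unfolding P by (simp add: Tint)
    also have "\<dots> = 1/2" by (simp add: P_alpha_def field_simps)
    finally show ?thesis .
  qed
  have Eh: "(\<integral>w. (case w of (x,y,z) \<Rightarrow> KC (y,z) True) \<partial>(MX \<Otimes>\<^sub>M (MY \<Otimes>\<^sub>M MZ))) = 1/2"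
  proof -
    have "(\<integral>w. (case w of (x,y,z) \<Rightarrow> KC (y,z) True) \<partial>(MX \<Otimes>\<^sub>M (MY \<Otimes>\<^sub>M MZ))) =
      (\<integral>w. (T True True True w + T True False True w + T False True True w + T False False True w) \<partial>(MX \<Otimes>\<^sub>M (MY \<Otimes>\<^sub>M MZ)))"
      unfolding T_def by (rule cong) (simp add: sA sB algebra_simps)
    also have "\<dots> = P_alpha \<alpha> True True True + P_alpha \<alpha> True False True + P_alpha \<alpha> False True True + P_alpha \<alpha> False False True"
      unfolding P by (simp add: Tint)
    also have "\<dots> = 1/2" by (simp add: P_alpha_def field_simps)
    finally show ?thesis .
  qed
  have El: "(\<integral>w. (case w of (x,y,z) \<Rightarrow> KB (x,z) True * KA (x,y) True + KB (x,z) True * KC (y,z) True - KB (x,z) True) \<partial>(MX \<Otimes>\<^sub>M (MY \<Otimes>\<^sub>M MZ)))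
       = \<alpha>/2 - (1-\<alpha>)/6"
  proof -
    have "(\<integral>w. (case w of (x,y,z) \<Rightarrow> KB (x,z) True * KA (x,y) True + KB (x,z) True * KC (y,z) True - KB (x,z) True) \<partial>(MX \<Otimes>\<^sub>M (MY \<Otimes>\<^sub>M MZ))) =
      (\<integral>w. (T True True True w - T False True False w) \<partial>(MX \<Otimes>\<^sub>M (MY \<Otimes>\<^sub>M MZ)))"
      unfolding T_def by (rule cong) (simp add: sA sC algebra_simps)
    also have "\<dots> = P_alpha \<alpha> True True True - P_alpha \<alpha> False True False"
      unfolding P by (simp add: Tint)
    also have "\<dots> = \<alpha>/2 - (1-\<alpha>)/6" by (simp add: P_alpha_def field_simps)
    finally show ?thesis .
  qed
  have "(\<integral>w. (case w of (x,y,z) \<Rightarrow> KB (x,z) True * KA (x,y) True + KB (x,z) True * KC (y,z) True - KB (x,z) True) \<partial>(MX \<Otimes>\<^sub>M (MY \<Otimes>\<^sub>M MZ)))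
    \<le> (\<integral>w. (case w of (x,y,z) \<Rightarrow> KA (x,y) True) \<partial>(MX \<Otimes>\<^sub>M (MY \<Otimes>\<^sub>M MZ))) *
      (\<integral>w. (case w of (x,y,z) \<Rightarrow> KC (y,z) True) \<partial>(MX \<Otimes>\<^sub>M (MY \<Otimes>\<^sub>M MZ)))"
    by (rule key[OF X Y Z mA[of True] _ mB[of True] _ mC[of True]]) (use bA bB bC in auto)
  then have "\<alpha>/2 - (1-\<alpha>)/6 \<le> 1/2 * (1/2)" unfolding El Ef Eh .
  then show False using assms by (simp add: field_simps)
qed


end
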